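(* Let $D,\Omega$ be planar domains with $0\notin D$, $\wp$ a smooth positive function on $\Omega$, and let $f:D\to\Omega$ be a diffeomorphism such that $$\wp^2(f(z))\,f_z\,\overline{f_{\bar z}}=\frac{\mathbf{c}}{z^2},\qquad z\in D,$$ for a real constant $\mathbf{c}$. Assume that for $w\in\Omega$ the following function is well defined: $$\omega(w)=\begin{cases}2\sqrt{-\mathbf{c}}\,\log\dfrac{1}{|f^{-1}(w)|},&\mathbf{c}<0,\\[4pt] 2\sqrt{\mathbf{c}}\,\arg(f^{-1}(w)),&\mathbf{c}>0.\end{cases}$$ Then $\omega$ satisfies $$\mathrm{div}\left(\frac{\nabla\omega}{\sqrt{1+\frac{|\nabla\omega(u,v)|^2}{\wp^2(u,v)}}}\right)=0\quad\text{in }\Omega.$$ *)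

theory Defs
  imports "HOL-Analysis.Analysis"
begin

text \<open>C^k functions on a set (derivative taken at each point of the set, meant for open sets).\<close>
primrec Ck_on :: "nat \<Rightarrow> 'a::euclidean_space set \<Rightarrow> ('a \<Rightarrow> 'b::real_normed_vector) \<Rightarrow> bool" where
  "Ck_on 0 S f = continuous_on S f"
| "Ck_on (Suc k) S f =
     (\<exists>f'. (\<forall>x\<in>S. (f has_derivative f' x) (at x)) \<and> (\<forall>v. Ck_on k S (\<lambda>x. f' x v)))"

definition smooth_on :: "'a::euclidean_space set \<Rightarrow> ('a \<Rightarrow> 'b::real_normed_vector) \<Rightarrow> bool" where
  "smooth_on S f \<longleftrightarrow> (\<forall>k. Ck_on k S f)"

definition wirt_z :: "(complex \<Rightarrow> complex) \<Rightarrow> complex \<Rightarrow> complex" where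
  "wirt_z f z = (frechet_derivative f (at z) 1 - \<i> * frechet_derivative f (at z) \<i>) / 2"

definition wirt_zbar :: "(complex \<Rightarrow> complex) \<Rightarrow> complex \<Rightarrow> complex" where
  "wirt_zbar f z = (frechet_derivative f (at z) 1 + \<i> * frechet_derivative f (at z) \<i>) / 2"

text \<open>Gradient of a real function of w = u + i v, written as the complex number omega_u + i omega_v.\<close>
definition grad :: "(complex \<Rightarrow> real) \<Rightarrow> complex \<Rightarrow> complex" where
  "grad g w = complex_of_real (frechet_derivative g (at w) 1)
              + \<i> * complex_of_real (frechet_derivative g (at w) \<i>)"

text \<open>Divergence of a planar vector field V = P + i Q: P_u + Q_v.\<close>
definition divergence :: "(complex \<Rightarrow> complex) \<Rightarrow> complex \<Rightarrow> real" where
  "divergence V w = Re (frechet_derivative V (at w) 1) + Im (frechet_derivative V (at w) \<i>)"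

end

theory Submission
  imports Defs
begin


lemma lin_decomp:
  assumes "linear (L :: complex \<Rightarrow> 'b::real_vector)"
  shows "L x = Re x *\<^sub>R L 1 + Im x *\<^sub>R L \<i>"
proof -
  have "x = Re x *\<^sub>R 1 + Im x *\<^sub>R \<i>" by (simp add: complex_eq_iff)
  then have "L x = L (Re x *\<^sub>R 1 + Im x *\<^sub>R \<i>)" by simp
  also have "\<dots> = Re x *\<^sub>R L 1 + Im x *\<^sub>R L \<i>"
    using assms by (simp add: linear_add linear_scale)
  finally show ?thesis .
qed

lemma line_deriv:
  fixes \<phi> :: "complex \<Rightarrow> real"
  assumes "(\<phi> has_derivative D) (at (a + of_real s * v))"
  shows "((\<lambda>s. \<phi> (a + of_real s * v)) has_real_derivative D v) (at s)"
proof -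
  have i: "((\<lambda>s. a + of_real s * v) has_derivative (\<lambda>s. of_real s * v)) (at s)"
    by (auto intro!: derivative_eq_intros)
  have "((\<phi> \<circ> (\<lambda>s. a + of_real s * v)) has_derivative (D \<circ> (\<lambda>s. of_real s * v))) (at s)"
    by (rule diff_chain_at[OF i assms])
  moreover have "(D \<circ> (\<lambda>s. of_real s * v)) = (\<lambda>x. D v * x)"
  proof
    fix x
    have "linear D" using assms has_derivative_linear by blast
    then have "D (x *\<^sub>R v) = x *\<^sub>R D v" by (simp add: linear_scale)
    then show "(D \<circ> (\<lambda>s. of_real s * v)) x = D v * x" by (simp add: scaleR_conv_of_real mult.commute)
  qed
  ultimately show ?thesis unfolding has_field_derivative_def o_def by simp
qed

lemma hline:
  fixes \<phi> :: "complex \<Rightarrow> real"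
  assumes "(\<phi> has_derivative D) (at (x0 + of_real s + \<i> * of_real t))"
  shows "((\<lambda>s. \<phi> (x0 + of_real s + \<i> * of_real t)) has_real_derivative D 1) (at s)"
proof -
  have e: "\<And>s. x0 + of_real s + \<i> * of_real t = (x0 + \<i> * of_real t) + of_real s * 1"
    by (simp add: algebra_simps)
  show ?thesis using line_deriv[of \<phi> D "x0 + \<i> * of_real t" s 1] assms unfolding e by simp
qed

lemma vline:
  fixes \<phi> :: "complex \<Rightarrow> real"
  assumes "(\<phi> has_derivative D) (at (x0 + of_real s + \<i> * of_real t))"
  shows "((\<lambda>t. \<phi> (x0 + of_real s + \<i> * of_real t)) has_real_derivative D \<i>) (at t)"
proof -
  have e: "\<And>t. x0 + of_real s + \<i> * of_real t = (x0 + of_real s) + of_real t * \<i>"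
    by (simp add: algebra_simps)
  show ?thesis using line_deriv[of \<phi> D "x0 + of_real s" t \<i>] assms unfolding e by simp
qed

lemma schwarz_real:
  fixes \<phi> :: "complex \<Rightarrow> real"
  assumes S: "open S" "x0 \<in> S"
  and d0: "\<And>x. x \<in> S \<Longrightarrow> (\<phi> has_derivative D\<phi> x) (at x)"
  and d1: "\<And>x. x \<in> S \<Longrightarrow> ((\<lambda>y. D\<phi> y 1) has_derivative Ea x) (at x)"
  and d2: "\<And>x. x \<in> S \<Longrightarrow> ((\<lambda>y. D\<phi> y \<i>) has_derivative Eb x) (at x)"
  and c1: "continuous_on S (\<lambda>x. Ea x \<i>)" and c2: "continuous_on S (\<lambda>x. Eb x 1)"
  shows "Ea x0 \<i> = Eb x0 1"
proof (rule ccontr)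
  assume ne: "Ea x0 \<i> \<noteq> Eb x0 1"
  define \<epsilon> where "\<epsilon> = \<bar>Ea x0 \<i> - Eb x0 1\<bar> / 2"
  have \<epsilon>: "\<epsilon> > 0" using ne by (simp add: \<epsilon>_def)
  obtain r where r: "r>0" "ball x0 r \<subseteq> S" using S openE by blast
  have "isCont (\<lambda>x. Ea x \<i>) x0" using c1 S continuous_on_eq_continuous_at by blast
  then obtain r1 where r1: "r1>0" "\<And>x. dist x x0 < r1 \<Longrightarrow> dist (Ea x \<i>) (Ea x0 \<i>) < \<epsilon>"
    using \<epsilon> unfolding continuous_at_eps_delta by blast
  have "isCont (\<lambda>x. Eb x 1) x0" using c2 S continuous_on_eq_continuous_at by blast
  then obtain r2 where r2: "r2>0" "\<And>x. dist x x0 < r2 \<Longrightarrow> dist (Eb x 1) (Eb x0 1) < \<epsilon>"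
    using \<epsilon> unfolding continuous_at_eps_delta by blast
  define \<delta> where "\<delta> = min r (min r1 r2)"
  have \<delta>: "\<delta> > 0" "\<delta> \<le> r" "\<delta> \<le> r1" "\<delta> \<le> r2" using r r1 r2 by (auto simp: \<delta>_def)
  define h where "h = \<delta> / 3"
  have h: "h > 0" using \<delta> by (simp add: h_def)
  define pt where "pt = (\<lambda>s t. x0 + of_real s + \<i> * of_real t)"
  have inball: "dist (pt s t) x0 < \<delta>" if "0 \<le> s" "s \<le> h" "0 \<le> t" "t \<le> h" for s t
  proof -
    have "dist (pt s t) x0 = norm (of_real s + \<i> * of_real t)"
      by (simp add: pt_def dist_norm)
    also have "\<dots> \<le> norm (of_real s :: complex) + norm (\<i> * of_real t)" by (rule norm_triangle_ineq)
    also have "\<dots> = \<bar>s\<bar> + \<bar>t\<bar>" by (simp add: norm_mult)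
    also have "\<dots> < \<delta>" using that h_def \<delta> by auto
    finally show ?thesis .
  qed
  have inS: "pt s t \<in> S" if "0 \<le> s" "s \<le> h" "0 \<le> t" "t \<le> h" for s t
    using inball[OF that] \<delta> r by (auto simp: dist_commute)
  define \<Delta> where "\<Delta> = \<phi> (pt h h) - \<phi> (pt h 0) - \<phi> (pt 0 h) + \<phi> (pt 0 0)"
  have "\<exists>\<xi>. 0 < \<xi> \<and> \<xi> < h \<and> (\<lambda>s. \<phi> (pt s h) - \<phi> (pt s 0)) h - (\<lambda>s. \<phi> (pt s h) - \<phi> (pt s 0)) 0
      = (h - 0) * (D\<phi> (pt \<xi> h) 1 - D\<phi> (pt \<xi> 0) 1)"
  proof (rule MVT2[OF h])
    fix s assume "0 \<le> s" "s \<le> h"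
    then show "((\<lambda>s. \<phi> (pt s h) - \<phi> (pt s 0)) has_real_derivative D\<phi> (pt s h) 1 - D\<phi> (pt s 0) 1) (at s)"
      unfolding pt_def using h
      by (intro DERIV_diff hline d0 inS[unfolded pt_def]) auto
  qed
  then obtain \<xi> where \<xi>: "0 < \<xi>" "\<xi> < h" "\<Delta> = h * (D\<phi> (pt \<xi> h) 1 - D\<phi> (pt \<xi> 0) 1)"
    unfolding \<Delta>_def by (auto simp: algebra_simps)
  have "\<exists>\<eta>. 0 < \<eta> \<and> \<eta> < h \<and> (\<lambda>t. D\<phi> (pt \<xi> t) 1) h - (\<lambda>t. D\<phi> (pt \<xi> t) 1) 0 = (h - 0) * Ea (pt \<xi> \<eta>) \<i>"
  proof (rule MVT2[OF h])
    fix t assume "0 \<le> t" "t \<le> h"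
    then show "((\<lambda>t. D\<phi> (pt \<xi> t) 1) has_real_derivative Ea (pt \<xi> t) \<i>) (at t)"
      unfolding pt_def using h \<xi>
      by (intro vline d1 inS[unfolded pt_def]) auto
  qed
  then obtain \<eta> where \<eta>: "0 < \<eta>" "\<eta> < h" "\<Delta> = h * (h * Ea (pt \<xi> \<eta>) \<i>)"
    using \<xi> by auto
  have "\<exists>\<tau>. 0 < \<tau> \<and> \<tau> < h \<and> (\<lambda>t. \<phi> (pt h t) - \<phi> (pt 0 t)) h - (\<lambda>t. \<phi> (pt h t) - \<phi> (pt 0 t)) 0
      = (h - 0) * (D\<phi> (pt h \<tau>) \<i> - D\<phi> (pt 0 \<tau>) \<i>)"
  proof (rule MVT2[OF h])
    fix t assume "0 \<le> t" "t \<le> h"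
    then show "((\<lambda>t. \<phi> (pt h t) - \<phi> (pt 0 t)) has_real_derivative D\<phi> (pt h t) \<i> - D\<phi> (pt 0 t) \<i>) (at t)"
      unfolding pt_def using h
      by (intro DERIV_diff vline d0 inS[unfolded pt_def]) auto
  qed
  then obtain \<tau> where \<tau>: "0 < \<tau>" "\<tau> < h" "\<Delta> = h * (D\<phi> (pt h \<tau>) \<i> - D\<phi> (pt 0 \<tau>) \<i>)"
    unfolding \<Delta>_def by (auto simp: algebra_simps)
  have "\<exists>\<sigma>. 0 < \<sigma> \<and> \<sigma> < h \<and> (\<lambda>s. D\<phi> (pt s \<tau>) \<i>) h - (\<lambda>s. D\<phi> (pt s \<tau>) \<i>) 0 = (h - 0) * Eb (pt \<sigma> \<tau>) 1"
  proof (rule MVT2[OF h])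
    fix s assume "0 \<le> s" "s \<le> h"
    then show "((\<lambda>s. D\<phi> (pt s \<tau>) \<i>) has_real_derivative Eb (pt s \<tau>) 1) (at s)"
      unfolding pt_def using h \<tau>
      by (intro hline d2 inS[unfolded pt_def]) auto
  qed
  then obtain \<sigma> where \<sigma>: "0 < \<sigma>" "\<sigma> < h" "\<Delta> = h * (h * Eb (pt \<sigma> \<tau>) 1)"
    using \<tau> by auto
  have eq: "Ea (pt \<xi> \<eta>) \<i> = Eb (pt \<sigma> \<tau>) 1" using \<eta>(3) \<sigma>(3) h by simp
  have a: "dist (Ea (pt \<xi> \<eta>) \<i>) (Ea x0 \<i>) < \<epsilon>"
    using r1(2)[OF less_le_trans[OF inball \<delta>(3)]] \<xi> \<eta> by auto
  have b: "dist (Eb (pt \<sigma> \<tau>) 1) (Eb x0 1) < \<epsilon>"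
    using r2(2)[OF less_le_trans[OF inball \<delta>(4)]] \<sigma> \<tau> by auto
  have aux: "\<And>a b c d::real. \<bar>a - c\<bar> < \<bar>c - d\<bar> / 2 \<Longrightarrow> \<bar>b - d\<bar> < \<bar>c - d\<bar> / 2 \<Longrightarrow> a = b \<Longrightarrow> False"
    by (simp add: abs_if split: if_split_asm)
  show False using aux[OF a[unfolded \<epsilon>_def dist_real_def] b[unfolded \<epsilon>_def dist_real_def] eq] .
qed



lemma key_lin:
  fixes \<alpha> \<gamma> a1 a2 :: complex
  assumes inv1: "Re \<alpha> *\<^sub>R a1 + Im \<alpha> *\<^sub>R a2 = 1"
    and inv2: "Re \<gamma> *\<^sub>R a1 + Im \<gamma> *\<^sub>R a2 = \<i>"
  defines "d \<equiv> Re \<alpha> * Im \<gamma> - Im \<alpha> * Re \<gamma>"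
  defines "A \<equiv> (a1 - \<i> * a2) / 2" and "B \<equiv> (a1 + \<i> * a2) / 2"
  shows "d * ((cmod A)\<^sup>2 - (cmod B)\<^sup>2) = 1"
    "\<alpha> = of_real d * (cnj A - B)" "\<gamma> = \<i> * of_real d * (cnj A + B)"
proof -
  have e1: "Re \<alpha> * Re a1 + Im \<alpha> * Re a2 = 1" "Re \<alpha> * Im a1 + Im \<alpha> * Im a2 = 0"
    using inv1 by (simp_all add: complex_eq_iff)
  have e2: "Re \<gamma> * Re a1 + Im \<gamma> * Re a2 = 0" "Re \<gamma> * Im a1 + Im \<gamma> * Im a2 = 1"
    using inv2 by (simp_all add: complex_eq_iff)
  define M where "M = Re a1 * Im a2 - Re a2 * Im a1"
  have n: "(cmod A)\<^sup>2 - (cmod B)\<^sup>2 = M"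
    unfolding A_def B_def cmod_power2 M_def by (simp add: power2_eq_square field_simps)
  have dM: "d * M = 1"
    unfolding M_def d_def using e1 e2 by algebra
  show "d * ((cmod A)\<^sup>2 - (cmod B)\<^sup>2) = 1" using n dM by simp
  have i1: "Re \<alpha> * M = Im a2 * (Re \<alpha> * Re a1 + Im \<alpha> * Re a2) - Re a2 * (Re \<alpha> * Im a1 + Im \<alpha> * Im a2)"
    unfolding M_def by (simp add: algebra_simps)
  have i2: "Im \<alpha> * M = Re a1 * (Re \<alpha> * Im a1 + Im \<alpha> * Im a2) - Im a1 * (Re \<alpha> * Re a1 + Im \<alpha> * Re a2)"
    unfolding M_def by (simp add: algebra_simps)
  have i3: "Re \<gamma> * M = Im a2 * (Re \<gamma> * Re a1 + Im \<gamma> * Re a2) - Re a2 * (Re \<gamma> * Im a1 + Im \<gamma> * Im a2)"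
    unfolding M_def by (simp add: algebra_simps)
  have i4: "Im \<gamma> * M = Re a1 * (Re \<gamma> * Im a1 + Im \<gamma> * Im a2) - Im a1 * (Re \<gamma> * Re a1 + Im \<gamma> * Re a2)"
    unfolding M_def by (simp add: algebra_simps)
  have j: "Re \<alpha> * M = Im a2" "Im \<alpha> * M = - Im a1" "Re \<gamma> * M = - Re a2" "Im \<gamma> * M = Re a1"
    using i1 i2 i3 i4 e1 e2 by simp_all
  have k: "x = d * (x * M)" for x using dM by (simp add: algebra_simps)
  have l: "Re \<alpha> = d * Im a2" "Im \<alpha> = - d * Im a1" "Re \<gamma> = - d * Re a2" "Im \<gamma> = d * Re a1"
    using k[of "Re \<alpha>"] k[of "Im \<alpha>"] k[of "Re \<gamma>"] k[of "Im \<gamma>"] j by simp_all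
  show "\<alpha> = of_real d * (cnj A - B)"
    unfolding A_def B_def using l by (simp add: complex_eq_iff field_simps)
  show "\<gamma> = \<i> * of_real d * (cnj A + B)"
    unfolding A_def B_def using l by (simp add: complex_eq_iff field_simps)
qed



lemma key_alg2:
  fixes A B z \<beta> :: complex and p c d :: real
  assumes p: "p > 0" and z: "z \<noteq> 0" and c: "c \<noteq> 0"
    and dJ: "d * ((cmod A)\<^sup>2 - (cmod B)\<^sup>2) = 1"
    and eq: "complex_of_real (p\<^sup>2) * A * cnj B = complex_of_real c / z\<^sup>2"
    and \<beta>: "\<beta>\<^sup>2 = complex_of_real (-4 * c)"
  defines "e \<equiv> \<beta> / z"
  defines "P \<equiv> e * complex_of_real d * cnj A" and "Q \<equiv> - e * complex_of_real d * B"
  shows "(Q + cnj P) / complex_of_real (sqrt (1 + (cmod (Q + cnj P))\<^sup>2 / p\<^sup>2))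
         = complex_of_real (sgn d) * (cnj P - Q)"
proof -
  have d: "d \<noteq> 0" using dJ by auto
  have rhs0: "complex_of_real c / z\<^sup>2 \<noteq> 0" using c z by simp
  have A: "A \<noteq> 0" and B: "B \<noteq> 0" using eq rhs0 by auto
  have \<beta>0: "\<beta> \<noteq> 0" using \<beta> c by auto
  have e0: "e \<noteq> 0" using \<beta>0 z by (simp add: e_def)
  define mP where "mP = cmod P"
  define mQ where "mQ = cmod Q"
  have mP: "mP = cmod e * \<bar>d\<bar> * cmod A" by (simp add: mP_def P_def norm_mult)
  have mQ: "mQ = cmod e * \<bar>d\<bar> * cmod B" by (simp add: mQ_def Q_def norm_mult)
  have mP0: "mP > 0" using mP e0 d A by simp
  have mQ0: "mQ > 0" using mQ e0 d B by simp
  have K1: "mP\<^sup>2 - mQ\<^sup>2 = (cmod e)\<^sup>2 * d"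
  proof -
    have "mP\<^sup>2 - mQ\<^sup>2 = (cmod e)\<^sup>2 * d * (d * ((cmod A)\<^sup>2 - (cmod B)\<^sup>2))"
      unfolding mP mQ by (simp add: power2_eq_square algebra_simps)
    then show ?thesis using dJ by simp
  qed
  have AB: "p\<^sup>2 * (cmod A * cmod B) = \<bar>c\<bar> / (cmod z)\<^sup>2"
  proof -
    have "cmod (complex_of_real (p\<^sup>2) * A * cnj B) = cmod (complex_of_real c / z\<^sup>2)" using eq by simp
    then show ?thesis by (simp add: norm_mult norm_divide norm_power)
  qed
  have E: "(cmod e)\<^sup>2 = 4 * \<bar>c\<bar> / (cmod z)\<^sup>2"
  proof -
    have "(cmod \<beta>)\<^sup>2 = cmod (\<beta>\<^sup>2)" by (simp add: norm_power)
    also have "\<dots> = 4 * \<bar>c\<bar>" using \<beta> by (simp add: norm_mult)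
    finally show ?thesis by (simp add: e_def norm_divide power_divide)
  qed
  have K2: "(mP\<^sup>2 - mQ\<^sup>2)\<^sup>2 = 4 * (mP * mQ) * p\<^sup>2"
  proof -
    have "(mP\<^sup>2 - mQ\<^sup>2)\<^sup>2 = (cmod e)\<^sup>2 * d\<^sup>2 * (cmod e)\<^sup>2" using K1 by (simp add: power2_eq_square)
    also have "\<dots> = (cmod e)\<^sup>2 * d\<^sup>2 * 4 * (p\<^sup>2 * (cmod A * cmod B))" using E AB by simp
    also have "\<dots> = 4 * (mP * mQ) * p\<^sup>2" unfolding mP mQ by (simp add: power2_eq_square algebra_simps)
    finally show ?thesis .
  qed
  have K3: "P * Q = complex_of_real (mP * mQ)"
  proof -
    have cAB: "cnj A * B = complex_of_real c / (complex_of_real (p\<^sup>2) * (cnj z)\<^sup>2)"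
    proof -
      have "cnj (complex_of_real (p\<^sup>2) * A * cnj B) = cnj (complex_of_real c / z\<^sup>2)" using eq by simp
      then have "complex_of_real (p\<^sup>2) * (cnj A * B) = complex_of_real c / (cnj z)\<^sup>2" by (simp add: mult.assoc)
      then show ?thesis using p z by (auto simp: field_simps)
    qed
    have e2: "e\<^sup>2 = - complex_of_real (4 * c) / z\<^sup>2" using \<beta> by (simp add: e_def power_divide)
    have "P * Q = - e\<^sup>2 * complex_of_real (d\<^sup>2) * (cnj A * B)"
      by (simp add: P_def Q_def power2_eq_square algebra_simps)
    also have "\<dots> = complex_of_real (4 * c\<^sup>2 * d\<^sup>2 / (p\<^sup>2 * (cmod z)^4))"
    proof -
      have zz: "(z * cnj z)\<^sup>2 = complex_of_real ((cmod z)^4)"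
      proof -
        have "z * cnj z = complex_of_real ((cmod z)\<^sup>2)" by (rule complex_norm_square[symmetric])
        then show ?thesis by (simp flip: of_real_power power_mult)
      qed
      have zz2: "z * (z * (cnj z * cnj z)) = complex_of_real (cmod z) ^ 4"
        using zz by (simp add: power2_eq_square mult.assoc mult.left_commute)
      show ?thesis unfolding e2 cAB using p z
        by (simp add: field_simps power2_eq_square zz2)
    qed
    finally have PQ: "P * Q = complex_of_real (4 * c\<^sup>2 * d\<^sup>2 / (p\<^sup>2 * (cmod z)^4))" .
    have pos: "4 * c\<^sup>2 * d\<^sup>2 / (p\<^sup>2 * (cmod z)^4) \<ge> 0" by simp
    have "cmod (P * Q) = mP * mQ" by (simp add: mP_def mQ_def norm_mult)
    moreover have "cmod (P * Q) = \<bar>4 * c\<^sup>2 * d\<^sup>2 / (p\<^sup>2 * (cmod z)^4)\<bar>"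
      by (simp only: PQ norm_of_real)
    ultimately have "4 * c\<^sup>2 * d\<^sup>2 / (p\<^sup>2 * (cmod z)^4) = mP * mQ" using pos by simp
    then show ?thesis using PQ by simp
  qed
  have P0: "P \<noteq> 0" using mP0 mP_def by auto
  have Qf: "Q = complex_of_real (mQ / mP) * cnj P"
  proof -
    have "cnj P * P = complex_of_real (mP\<^sup>2)" unfolding mP_def by (simp only: complex_norm_square mult.commute)
    then have "(P * Q) * cnj P = Q * complex_of_real (mP\<^sup>2)" by (simp add: algebra_simps)
    then have "Q = (P * Q) * cnj P / complex_of_real (mP\<^sup>2)" using mP0
      by (simp add: nonzero_eq_divide_eq) (metis mult.commute)
    then show ?thesis using K3 mP0 by (simp add: power2_eq_square field_simps)
  qed
  have G: "Q + cnj P = complex_of_real ((mP + mQ) / mP) * cnj P"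
    unfolding Qf using mP0 by (simp add: field_simps)
  have nG: "cmod (Q + cnj P) = mP + mQ"
  proof -
    have "cmod (Q + cnj P) = \<bar>(mP + mQ) / mP\<bar> * mP"
      unfolding G mP_def by (simp only: norm_mult norm_of_real complex_mod_cnj)
    then show ?thesis using mP0 mQ0 by simp
  qed
  have neq: "mP - mQ \<noteq> 0" using K1 d e0 by (auto simp: power2_eq_square)
  have sq: "1 + (mP + mQ)\<^sup>2 / p\<^sup>2 = ((mP + mQ) / (mP - mQ))\<^sup>2"
  proof -
    have "(mP - mQ)\<^sup>2 * (mP + mQ)\<^sup>2 = 4 * (mP * mQ) * p\<^sup>2"
      using K2 by (simp add: power2_eq_square algebra_simps)
    then have h: "(p\<^sup>2 + (mP + mQ)\<^sup>2) * (mP - mQ)\<^sup>2 = (mP + mQ)\<^sup>2 * p\<^sup>2"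
      by (simp add: power2_eq_square algebra_simps)
    have l: "1 + (mP + mQ)\<^sup>2 / p\<^sup>2 = (p\<^sup>2 + (mP + mQ)\<^sup>2) / p\<^sup>2" using p by (simp add: field_simps)
    show ?thesis unfolding l power_divide using neq p h by (simp add: frac_eq_eq)
  qed
  have W: "sqrt (1 + (cmod (Q + cnj P))\<^sup>2 / p\<^sup>2) = (mP + mQ) / \<bar>mP - mQ\<bar>"
    unfolding nG sq by (simp add: real_sqrt_abs abs_divide) (use mP0 mQ0 in simp)
  have sg: "sgn d * (mP - mQ) = \<bar>mP - mQ\<bar>"
  proof -
    have "(mP - mQ) * (mP + mQ) = (cmod e)\<^sup>2 * d" using K1 by (simp add: power2_eq_square algebra_simps)
    moreover have "(cmod e)\<^sup>2 > 0" "mP + mQ > 0" using e0 mP0 mQ0 by auto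
    ultimately have pr: "(mP - mQ) * (mP + mQ) = (cmod e)\<^sup>2 * d" "(cmod e)\<^sup>2 > 0" "mP + mQ > 0" by auto
    show ?thesis
    proof (cases "d > 0")
      case True
      then have "(mP - mQ) * (mP + mQ) > 0" using pr by simp
      then have "mP - mQ > 0" using pr(3) by (simp add: zero_less_mult_iff)
      then show ?thesis using True by simp
    next
      case False
      then have "d < 0" using d by simp
      then have "(mP - mQ) * (mP + mQ) < 0" using pr by (simp add: mult_pos_neg)
      then have "mP - mQ < 0" using pr(3) by (simp add: mult_less_0_iff)
      then show ?thesis using \<open>d < 0\<close> by simp
    qed
  qed
  have s1: "(mP + mQ) / mP / ((mP + mQ) / \<bar>mP - mQ\<bar>) = \<bar>mP - mQ\<bar> / mP"
  proof -
    have g: "\<And>a b m::real. a \<noteq> 0 \<Longrightarrow> b \<noteq> 0 \<Longrightarrow> m \<noteq> 0 \<Longrightarrow> a / m / (a / b) = b / m"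
      by (simp add: field_simps)
    show ?thesis by (rule g) (use mP0 mQ0 neq in auto)
  qed
  have L: "(Q + cnj P) / complex_of_real ((mP + mQ) / \<bar>mP - mQ\<bar>) = complex_of_real (\<bar>mP - mQ\<bar> / mP) * cnj P"
  proof -
    have g: "\<And>a b y. (complex_of_real a * y) / complex_of_real b = complex_of_real (a / b) * y"
      by (simp add: of_real_divide)
    show ?thesis unfolding G s1[symmetric] by (rule g)
  qed
  have s2: "sgn d * (1 - mQ / mP) = \<bar>mP - mQ\<bar> / mP"
    using mP0 sg by (simp add: field_simps)
  have R: "complex_of_real (sgn d) * (cnj P - Q) = complex_of_real (sgn d * (1 - mQ / mP)) * cnj P"
    unfolding Qf by (simp add: algebra_simps)
  show ?thesis unfolding W L R s2 ..

qed



lemma arg_local: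
  fixes \<theta> :: "complex \<Rightarrow> real"
  assumes D: "open D" "0 \<notin> D" and z0: "z0 \<in> D"
    and ct: "continuous_on D \<theta>"
    and rep: "\<forall>z\<in>D. z = complex_of_real (cmod z) * exp (\<i> * complex_of_real (\<theta> z))"
  shows "\<exists>r>0. \<forall>z\<in>D. cmod (z - z0) < r \<longrightarrow> \<theta> z = Im (Ln (z / z0)) + \<theta> z0"
proof -
  have z00: "z0 \<noteq> 0" using D z0 by auto
  define \<sigma> where "\<sigma> z = \<theta> z - \<theta> z0 - Im (Ln (z / z0))" for z
  have cis\<theta>: "cis (\<theta> z) = sgn z" if "z \<in> D" for z
  proof -
    have z: "z \<noteq> 0" using that D by auto
    have "z = complex_of_real (cmod z) * cis (\<theta> z)" using rep that by (simp add: cis_conv_exp)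
    then show ?thesis using z by (simp add: sgn_eq field_simps)
  qed
  have int: "\<exists>n::int. \<sigma> z = of_int (2 * n) * pi" if "z \<in> D" for z
  proof -
    have z: "z \<noteq> 0" using that D by auto
    have "cis (\<sigma> z) = cis (\<theta> z) / cis (\<theta> z0) / cis (Im (Ln (z / z0)))"
      by (simp add: \<sigma>_def cis_divide)
    also have "\<dots> = sgn z / sgn z0 / sgn (z / z0)"
      using cis\<theta>[OF that] cis\<theta>[OF z0] Arg_eq_Im_Ln[of "z / z0"] cis_Arg[of "z / z0"] z z00 by simp
    also have "\<dots> = 1" using z z00 by (simp add: sgn_divide sgn_eq_0_iff)
    finally have "exp (\<i> * complex_of_real (\<sigma> z)) = 1" by (simp add: cis_conv_exp)
    then show ?thesis unfolding exp_eq_1 by simp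
  qed
  have c1: "isCont \<theta> z0" using ct D z0 continuous_on_eq_continuous_at by blast
  have c2: "isCont (\<lambda>z. Ln (z / z0)) z0"
  proof -
    have "isCont (\<lambda>z. z / z0) z0" using z00 by (intro continuous_intros)
    moreover have "isCont Ln (z0 / z0)" using z00 by (intro continuous_at_Ln) (simp)
    ultimately show ?thesis by (rule continuous_at_compose[unfolded o_def])
  qed
  have "isCont \<sigma> z0" unfolding \<sigma>_def using c1 c2 by (intro continuous_intros) auto
  moreover have "\<sigma> z0 = 0" using z00 by (simp add: \<sigma>_def)
  ultimately obtain r where r: "r > 0" "\<And>z. dist z z0 < r \<Longrightarrow> dist (\<sigma> z) 0 < 2 * pi"
    unfolding continuous_at_eps_delta by (metis pi_gt_zero mult_pos_pos zero_less_numeral)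
  show ?thesis
  proof (intro exI conjI ballI impI)
    show "r > 0" by fact
    fix z assume z: "z \<in> D" "cmod (z - z0) < r"
    then have lt: "\<bar>\<sigma> z\<bar> < 2 * pi" using r(2)[of z] by (simp add: dist_norm)
    obtain n :: int where n: "\<sigma> z = of_int (2 * n) * pi" using int z by blast
    have "\<bar>of_int n\<bar> * (2 * pi) < 1 * (2 * pi)" using lt n by (simp add: abs_mult)
    then have "\<bar>of_int n :: real\<bar> < 1" by (simp only: mult_less_cancel_right) simp
    then have "n = 0" by linarith
    then show "\<theta> z = Im (Ln (z / z0)) + \<theta> z0" using n by (simp add: \<sigma>_def)
  qed
qed



lemma key_full:
  fixes \<alpha> \<gamma> a1 a2 z \<beta> :: complex and p c :: real
  assumes p: "p > 0" and z: "z \<noteq> 0" and c: "c \<noteq> 0"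
    and inv1: "Re \<alpha> *\<^sub>R a1 + Im \<alpha> *\<^sub>R a2 = 1"
    and inv2: "Re \<gamma> *\<^sub>R a1 + Im \<gamma> *\<^sub>R a2 = \<i>"
    and eq: "complex_of_real (p\<^sup>2) * ((a1 - \<i> * a2) / 2) * cnj ((a1 + \<i> * a2) / 2) = complex_of_real c / z\<^sup>2"
    and \<beta>: "\<beta>\<^sup>2 = complex_of_real (-4 * c)"
  defines "d \<equiv> Re \<alpha> * Im \<gamma> - Im \<alpha> * Re \<gamma>"
  defines "G \<equiv> complex_of_real (Re (\<beta> / z * \<alpha>)) + \<i> * complex_of_real (Re (\<beta> / z * \<gamma>))"
  shows "G / complex_of_real (sqrt (1 + (cmod G)\<^sup>2 / p\<^sup>2))
         = complex_of_real (sgn d) * (complex_of_real (Im (\<beta> / z * \<gamma>)) - \<i> * complex_of_real (Im (\<beta> / z * \<alpha>)))"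
proof -
  define A where "A = (a1 - \<i> * a2) / 2"
  define B where "B = (a1 + \<i> * a2) / 2"
  note kl = key_lin[OF inv1 inv2, folded d_def A_def B_def]
  define e where "e = \<beta> / z"
  define P where "P = e * complex_of_real d * cnj A"
  define Q where "Q = - e * complex_of_real d * B"
  have ea: "e * \<alpha> = P + Q" unfolding P_def Q_def kl(2) by (simp add: algebra_simps)
  have eg: "e * \<gamma> = \<i> * (P - Q)" unfolding P_def Q_def kl(3) by (simp add: algebra_simps)
  have G: "G = Q + cnj P" unfolding G_def e_def[symmetric] ea eg by (simp add: complex_eq_iff)
  have R: "complex_of_real (Im (e * \<gamma>)) - \<i> * complex_of_real (Im (e * \<alpha>)) = cnj P - Q"
    unfolding ea eg by (simp add: complex_eq_iff)
  have "(Q + cnj P) / complex_of_real (sqrt (1 + (cmod (Q + cnj P))\<^sup>2 / p\<^sup>2))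
         = complex_of_real (sgn d) * (cnj P - Q)"
    unfolding P_def Q_def e_def
    by (rule key_alg2[OF p z c kl(1)]) (use eq \<beta> in \<open>simp_all add: A_def B_def\<close>)
  then show ?thesis unfolding G R[unfolded e_def] .
qed

lemma Ck_Suc_cont: "Ck_on (Suc k) S f \<Longrightarrow> continuous_on S f"
  by (auto intro!: continuous_at_imp_continuous_on dest: has_derivative_continuous)

lemma schwarz_cplx:
  fixes g :: "complex \<Rightarrow> complex"
  assumes S: "open S" "x0 \<in> S"
  and d0: "\<And>x. x \<in> S \<Longrightarrow> (g has_derivative g' x) (at x)"
  and d1: "\<And>x. x \<in> S \<Longrightarrow> ((\<lambda>y. g' y 1) has_derivative G1 x) (at x)"
  and d2: "\<And>x. x \<in> S \<Longrightarrow> ((\<lambda>y. g' y \<i>) has_derivative G2 x) (at x)"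
  and c1: "continuous_on S (\<lambda>x. G1 x \<i>)" and c2: "continuous_on S (\<lambda>x. G2 x 1)"
  shows "G1 x0 \<i> = G2 x0 1"
proof -
  have "Re (G1 x0 \<i>) = Re (G2 x0 1)"
    by (rule schwarz_real[where \<phi>="\<lambda>x. Re (g x)" and D\<phi>="\<lambda>x h. Re (g' x h)"
          and Ea="\<lambda>x h. Re (G1 x h)" and Eb="\<lambda>x h. Re (G2 x h)" and S=S])
      (use assms in \<open>auto intro: has_derivative_Re continuous_intros\<close>)
  moreover have "Im (G1 x0 \<i>) = Im (G2 x0 1)"
    by (rule schwarz_real[where \<phi>="\<lambda>x. Im (g x)" and D\<phi>="\<lambda>x h. Im (g' x h)"
          and Ea="\<lambda>x h. Im (G1 x h)" and Eb="\<lambda>x h. Im (G2 x h)" and S=S])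
      (use assms in \<open>auto intro: has_derivative_Im continuous_intros\<close>)
  ultimately show ?thesis by (simp add: complex_eq_iff)
qed



theorem proposition3p4:
  fixes D \<Omega> :: "complex set" and f :: "complex \<Rightarrow> complex" and p :: "complex \<Rightarrow> real"
    and c :: real and \<theta> :: "complex \<Rightarrow> real" and \<omega> :: "complex \<Rightarrow> real"
  assumes D: "open D" "connected D" "0 \<notin> D"
    and \<Omega>: "open \<Omega>" "connected \<Omega>"
    and p: "smooth_on \<Omega> p" "\<forall>w\<in>\<Omega>. p w > 0"
    and diffeo: "bij_betw f D \<Omega>" "smooth_on D f" "smooth_on \<Omega> (inv_into D f)"
    and eq: "\<forall>z\<in>D. complex_of_real ((p (f z))\<^sup>2) * wirt_z f z * cnj (wirt_zbar f z)
                   = complex_of_real c / z\<^sup>2"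
    and c: "c \<noteq> 0"
    and arg_branch: "c > 0 \<Longrightarrow> continuous_on D \<theta> \<and>
                       (\<forall>z\<in>D. z = complex_of_real (cmod z) * exp (\<i> * complex_of_real (\<theta> z)))"
    and \<omega>_def: "\<omega> = (\<lambda>w. if c < 0 then 2 * sqrt (- c) * ln (1 / cmod (inv_into D f w))
                         else 2 * sqrt c * \<theta> (inv_into D f w))"
  shows "\<forall>w\<in>\<Omega>. (\<lambda>x. grad \<omega> x / complex_of_real (sqrt (1 + (cmod (grad \<omega> x))\<^sup>2 / (p x)\<^sup>2)))
                    differentiable (at w)
            \<and> divergence (\<lambda>x. grad \<omega> x / complex_of_real (sqrt (1 + (cmod (grad \<omega> x))\<^sup>2 / (p x)\<^sup>2))) w = 0"
proof -
  define g where "g = inv_into D f"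
  define V where "V = (\<lambda>x. grad \<omega> x / complex_of_real (sqrt (1 + (cmod (grad \<omega> x))\<^sup>2 / (p x)\<^sup>2)))"
  have bg: "bij_betw g \<Omega> D" unfolding g_def by (rule bij_betw_inv_into[OF diffeo(1)])
  have gD: "\<And>w. w \<in> \<Omega> \<Longrightarrow> g w \<in> D" using bg bij_betwE by blast
  have fg: "\<And>w. w \<in> \<Omega> \<Longrightarrow> f (g w) = w" unfolding g_def using diffeo(1) bij_betw_inv_into_right by metis
  have g0: "\<And>w. w \<in> \<Omega> \<Longrightarrow> g w \<noteq> 0" using gD D(3) by force
  have "Ck_on (Suc 0) D f" using diffeo(2) by (simp add: smooth_on_def)
  then obtain f' where f': "\<And>z. z \<in> D \<Longrightarrow> (f has_derivative f' z) (at z)" by auto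
  have "Ck_on (Suc (Suc (Suc 0))) \<Omega> g" using diffeo(3) by (simp add: smooth_on_def g_def)
  then obtain g' where g': "\<And>x. x \<in> \<Omega> \<Longrightarrow> (g has_derivative g' x) (at x)"
    and gC: "\<And>v. Ck_on (Suc (Suc 0)) \<Omega> (\<lambda>x. g' x v)" by auto
  obtain G1 where G1: "\<And>x. x \<in> \<Omega> \<Longrightarrow> ((\<lambda>x. g' x 1) has_derivative G1 x) (at x)"
    and G1C: "\<And>u. Ck_on (Suc 0) \<Omega> (\<lambda>x. G1 x u)" using gC[of 1] by auto
  obtain G2 where G2: "\<And>x. x \<in> \<Omega> \<Longrightarrow> ((\<lambda>x. g' x \<i>) has_derivative G2 x) (at x)"
    and G2C: "\<And>u. Ck_on (Suc 0) \<Omega> (\<lambda>x. G2 x u)" using gC[of \<i>] by auto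
  have G1c: "continuous_on \<Omega> (\<lambda>x. G1 x \<i>)" using Ck_Suc_cont G1C by blast
  have G2c: "continuous_on \<Omega> (\<lambda>x. G2 x 1)" using Ck_Suc_cont G2C by blast
  have gvc: "\<And>v. continuous_on \<Omega> (\<lambda>x. g' x v)" using Ck_Suc_cont gC by blast
  have gc: "continuous_on \<Omega> g"
    using g' by (auto intro!: continuous_at_imp_continuous_on dest: has_derivative_continuous)
  have inv: "f' (g w) (g' w h) = h" if w: "w \<in> \<Omega>" for w h
  proof -
    have "((f \<circ> g) has_derivative (f' (g w) \<circ> g' w)) (at w)"
      by (rule diff_chain_at[OF g'[OF w] f'[OF gD[OF w]]])
    then have "((\<lambda>x. x) has_derivative (f' (g w) \<circ> g' w)) (at w)"
      by (rule has_derivative_transform_within_open[OF _ \<Omega>(1) w]) (simp add: fg)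
    then have "f' (g w) \<circ> g' w = (\<lambda>x. x)" using has_derivative_ident has_derivative_unique by blast
    then show "f' (g w) (g' w h) = h" by (metis comp_apply)
  qed
  have lin_f: "\<And>z. z \<in> D \<Longrightarrow> linear (f' z)" using f' has_derivative_linear by blast
  have fd: "\<And>z. z \<in> D \<Longrightarrow> frechet_derivative f (at z) = f' z" using f' frechet_derivative_at by metis
  define dg where "dg w = Re (g' w 1) * Im (g' w \<i>) - Im (g' w 1) * Re (g' w \<i>)" for w
  have dgc: "continuous_on \<Omega> dg" unfolding dg_def using gvc by (intro continuous_intros) auto
  have invs: "Re (g' w 1) *\<^sub>R f' (g w) 1 + Im (g' w 1) *\<^sub>R f' (g w) \<i> = 1"
     "Re (g' w \<i>) *\<^sub>R f' (g w) 1 + Im (g' w \<i>) *\<^sub>R f' (g w) \<i> = \<i>" if w: "w \<in> \<Omega>" for w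
    using lin_decomp[OF lin_f[OF gD[OF w]], symmetric] inv[OF w] by auto
  have eqw: "complex_of_real ((p w)\<^sup>2) * ((f' (g w) 1 - \<i> * f' (g w) \<i>) / 2)
        * cnj ((f' (g w) 1 + \<i> * f' (g w) \<i>) / 2) = complex_of_real c / (g w)\<^sup>2" if w: "w \<in> \<Omega>" for w
    using eq gD[OF w] fg[OF w] fd[OF gD[OF w]] unfolding wirt_z_def wirt_zbar_def by force
  have dg0: "dg w \<noteq> 0" if w: "w \<in> \<Omega>" for w
    using key_lin(1)[OF invs[OF w]] unfolding dg_def by auto
  have pointwise: "(complex_of_real (Re (\<beta> / g w * g' w 1)) + \<i> * complex_of_real (Re (\<beta> / g w * g' w \<i>)))
     / complex_of_real (sqrt (1 + (cmod (complex_of_real (Re (\<beta> / g w * g' w 1)) + \<i> * complex_of_real (Re (\<beta> / g w * g' w \<i>))))\<^sup>2 / (p w)\<^sup>2))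
     = complex_of_real (sgn (dg w)) * (complex_of_real (Im (\<beta> / g w * g' w \<i>)) - \<i> * complex_of_real (Im (\<beta> / g w * g' w 1)))"
    if w: "w \<in> \<Omega>" and \<beta>: "\<beta>\<^sup>2 = complex_of_real (-4 * c)" for w \<beta>
    using key_full[OF _ g0[OF w] c invs[OF w] eqw[OF w] \<beta>] p(2) w unfolding dg_def by simp
  have \<omega>g: "\<omega> w = (if c < 0 then 2 * sqrt (- c) * ln (1 / cmod (g w)) else 2 * sqrt c * \<theta> (g w))" for w
    unfolding \<omega>_def g_def by simp
  show ?thesis unfolding V_def[symmetric]
  proof
    fix w0 assume w0: "w0 \<in> \<Omega>"
    define z0 where "z0 = g w0"
    have z0D: "z0 \<in> D" and z00: "z0 \<noteq> 0" using gD[OF w0] g0[OF w0] by (auto simp: z0_def)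
    have "\<exists>\<beta> k r. r > 0 \<and> r \<le> cmod z0 \<and> \<beta>\<^sup>2 = complex_of_real (-4 * c) \<and>
        (\<forall>w\<in>\<Omega>. cmod (g w - z0) < r \<longrightarrow> \<omega> w = Re (\<beta> * Ln (g w / z0)) + k)"
    proof (cases "c < 0")
      case True
      show ?thesis
      proof (intro exI conjI ballI impI)
        show "cmod z0 > 0" "cmod z0 \<le> cmod z0" using z00 by auto
        show "(complex_of_real (-2 * sqrt (-c)))\<^sup>2 = complex_of_real (-4 * c)"
          using True by (simp add: power2_eq_square flip: of_real_mult)
        fix w assume w: "w \<in> \<Omega>" "cmod (g w - z0) < cmod z0"
        have gw: "g w \<noteq> 0" using g0 w by auto
        show "\<omega> w = Re (complex_of_real (-2 * sqrt (-c)) * Ln (g w / z0)) + - 2 * sqrt (-c) * ln (cmod z0)"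
          using True gw z00 by (simp add: \<omega>g norm_divide ln_div algebra_simps)
      qed
    next
      case False
      then have cp: "c > 0" using c by simp
      obtain r0 where r0: "r0 > 0" "\<forall>z\<in>D. cmod (z - z0) < r0 \<longrightarrow> \<theta> z = Im (Ln (z / z0)) + \<theta> z0"
        using arg_local[OF D(1) D(3) z0D] arg_branch[OF cp] by blast
      show ?thesis
      proof (intro exI conjI ballI impI)
        show "min r0 (cmod z0) > 0" "min r0 (cmod z0) \<le> cmod z0" using z00 r0 by auto
        show "(- \<i> * complex_of_real (2 * sqrt c))\<^sup>2 = complex_of_real (-4 * c)"
        proof -
          have s: "complex_of_real (2 * sqrt c) * complex_of_real (2 * sqrt c) = complex_of_real (4 * c)"
            by (simp only: of_real_mult[symmetric]) (use cp in simp)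
          have t: "\<And>x. (- \<i> * x)\<^sup>2 = - (x * x)" by (simp add: power2_eq_square algebra_simps)
          show ?thesis unfolding t s by simp
        qed
        fix w assume w: "w \<in> \<Omega>" "cmod (g w - z0) < min r0 (cmod z0)"
        have "\<theta> (g w) = Im (Ln (g w / z0)) + \<theta> z0" using r0(2) gD[OF w(1)] w(2) by auto
        then show "\<omega> w = Re (- \<i> * complex_of_real (2 * sqrt c) * Ln (g w / z0)) + 2 * sqrt c * \<theta> z0"
          using False by (simp add: \<omega>g algebra_simps)
      qed
    qed
    then obtain \<beta> k r where r: "r > 0" "r \<le> cmod z0" and \<beta>: "\<beta>\<^sup>2 = complex_of_real (-4 * c)"
      and \<omega>loc: "\<And>w. w \<in> \<Omega> \<Longrightarrow> cmod (g w - z0) < r \<Longrightarrow> \<omega> w = Re (\<beta> * Ln (g w / z0)) + k"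
      by blast
    define N1 where "N1 = g -` ball z0 r \<inter> \<Omega>"
    have N1o: "open N1" unfolding N1_def using continuous_on_open_vimage[OF \<Omega>(1)] gc by blast
    have N1: "w \<in> \<Omega>" "cmod (g w - z0) < r" if "w \<in> N1" for w
      using that by (auto simp: N1_def dist_norm norm_minus_commute)
    have w0N1: "w0 \<in> N1" using w0 r by (simp add: N1_def z0_def)
    have notneg: "g w / z0 \<notin> \<real>\<^sub>\<le>\<^sub>0" if "w \<in> N1" for w
    proof -
      have "cmod (g w / z0 - 1) = cmod (g w - z0) / cmod z0" using z00
        by (simp add: norm_divide[symmetric] diff_divide_distrib)
      also have "\<dots> < 1" using N1[OF that] r z00 by simp
      finally have "cmod (g w / z0 - 1) < 1" .
      moreover have "\<bar>Re (g w / z0 - 1)\<bar> \<le> cmod (g w / z0 - 1)" by (rule abs_Re_le_cmod)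
      ultimately have "Re (g w / z0) > 0" by simp
      then show ?thesis by (simp add: complex_nonpos_Reals_iff)
    qed
    have Lder: "((\<lambda>w. Ln (g w / z0)) has_derivative (\<lambda>h. g' w h / g w)) (at w)" if w: "w \<in> N1" for w
    proof -
      have a: "((\<lambda>w. g w / z0) has_derivative (\<lambda>h. g' w h / z0)) (at w)"
        using g'[OF N1(1)[OF w]] z00 by (auto intro!: derivative_eq_intros)
      have b: "(Ln has_derivative (\<lambda>h. inverse (g w / z0) * h)) (at (g w / z0))"
        using has_field_derivative_Ln[OF notneg[OF w]] unfolding has_field_derivative_def .
      have "(((\<lambda>w. Ln w) \<circ> (\<lambda>w. g w / z0)) has_derivative ((\<lambda>h. inverse (g w / z0) * h) \<circ> (\<lambda>h. g' w h / z0))) (at w)"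
        by (rule diff_chain_at[OF a b])
      then have "((\<lambda>w. Ln (g w / z0)) has_derivative (\<lambda>h. inverse (g w / z0) * (g' w h / z0))) (at w)"
        by (simp only: o_def)
      then show ?thesis
        by (rule has_derivative_eq_rhs) (intro ext, use g0[OF N1(1)[OF w]] z00 in \<open>simp add: field_simps\<close>)
    qed
    have \<omega>der: "(\<omega> has_derivative (\<lambda>h. Re (\<beta> / g w * g' w h))) (at w)" if w: "w \<in> N1" for w
    proof -
      have "((\<lambda>w. Re (\<beta> * Ln (g w / z0)) + k) has_derivative (\<lambda>h. Re (\<beta> * (g' w h / g w)))) (at w)"
        using Lder[OF w] by (intro has_derivative_add_const has_derivative_Re has_derivative_mult_right)
      then have "((\<lambda>w. Re (\<beta> * Ln (g w / z0)) + k) has_derivative (\<lambda>h. Re (\<beta> / g w * g' w h))) (at w)"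
        by (rule has_derivative_eq_rhs) (simp add: field_simps)
      then show ?thesis
      proof (rule has_derivative_transform_within_open[OF _ N1o w])
        fix x assume x: "x \<in> N1"
        show "Re (\<beta> * Ln (g x / z0)) + k = \<omega> x" using \<omega>loc[OF N1(1)[OF x] N1(2)[OF x]] by simp
      qed
    qed
    have gradw: "grad \<omega> w = complex_of_real (Re (\<beta> / g w * g' w 1)) + \<i> * complex_of_real (Re (\<beta> / g w * g' w \<i>))"
      if w: "w \<in> N1" for w
      unfolding grad_def frechet_derivative_at[OF \<omega>der[OF w], symmetric] by simp
    have Vw: "V w = complex_of_real (sgn (dg w)) * (complex_of_real (Im (\<beta> / g w * g' w \<i>)) - \<i> * complex_of_real (Im (\<beta> / g w * g' w 1)))"
      if w: "w \<in> N1" for w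
      unfolding V_def gradw[OF w] using pointwise[OF N1(1)[OF w] \<beta>] .
    define s0 where "s0 = sgn (dg w0)"
    define N2 where "N2 = (\<lambda>w. s0 * dg w) -` {0<..} \<inter> N1"
    have N2o: "open N2"
    proof -
      have sub: "N1 \<subseteq> \<Omega>" by (auto simp: N1_def)
      have "continuous_on N1 (\<lambda>w. s0 * dg w)"
        by (rule continuous_on_mult[OF continuous_on_const continuous_on_subset[OF dgc sub]])
      then have "\<forall>B. open B \<longrightarrow> open ((\<lambda>w. s0 * dg w) -` B \<inter> N1)"
        by (simp only: continuous_on_open_vimage[OF N1o])
      then show ?thesis unfolding N2_def by (metis open_greaterThan)
    qed
    have w0N2: "w0 \<in> N2" using w0N1 dg0[OF w0] by (simp add: N2_def s0_def sgn_if)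
    have sN2: "sgn (dg w) = s0" if "w \<in> N2" for w
    proof -
      have "s0 * dg w > 0" using that by (simp add: N2_def)
      moreover have "s0 = 1 \<or> s0 = -1" using dg0[OF w0] by (auto simp: s0_def sgn_if)
      ultimately show ?thesis by (auto simp: sgn_if)
    qed
    define H where "H w = complex_of_real s0 * (complex_of_real (Im (\<beta> * g' w \<i> / g w)) - \<i> * complex_of_real (Im (\<beta> * g' w 1 / g w)))" for w
    have VH: "H w = V w" if "w \<in> N2" for w
      using Vw[of w] sN2[OF that] that by (simp add: N2_def H_def)
    define D1 where "D1 h = (\<beta> * G1 w0 h * g w0 - \<beta> * g' w0 1 * g' w0 h) / (g w0 * g w0)" for h
    define D2 where "D2 h = (\<beta> * G2 w0 h * g w0 - \<beta> * g' w0 \<i> * g' w0 h) / (g w0 * g w0)" for h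
    have dq1: "((\<lambda>w. \<beta> * g' w 1 / g w) has_derivative D1) (at w0)"
      unfolding D1_def
      by (rule has_derivative_divide'[OF has_derivative_mult_right[OF G1[OF w0]] g'[OF w0] g0[OF w0]])
    have dq2: "((\<lambda>w. \<beta> * g' w \<i> / g w) has_derivative D2) (at w0)"
      unfolding D2_def
      by (rule has_derivative_divide'[OF has_derivative_mult_right[OF G2[OF w0]] g'[OF w0] g0[OF w0]])
    define H' where "H' h = complex_of_real s0 * (complex_of_real (Im (D2 h)) - \<i> * complex_of_real (Im (D1 h)))" for h
    have Hd: "(H has_derivative H') (at w0)"
      unfolding H_def[abs_def] H'_def[abs_def]
      by (intro has_derivative_mult_right has_derivative_diff has_derivative_of_real has_derivative_Im dq1 dq2)
    have Vd: "(V has_derivative H') (at w0)"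
      by (rule has_derivative_transform_within_open[OF Hd N2o w0N2]) (rule VH)
    have sym: "G1 w0 \<i> = G2 w0 1"
      by (rule schwarz_cplx[OF \<Omega>(1) w0 g' G1 G2 G1c G2c])
    have "divergence V w0 = Re (H' 1) + Im (H' \<i>)"
      unfolding divergence_def frechet_derivative_at[OF Vd, symmetric] ..
    also have "\<dots> = s0 * (Im (D2 1) - Im (D1 \<i>))" by (simp add: H'_def algebra_simps)
    also have "\<dots> = 0" unfolding D1_def D2_def sym by (simp add: ac_simps)
    finally show "V differentiable (at w0) \<and> divergence V w0 = 0"
      using Vd by (auto simp: differentiable_def)
  qed
qed

end
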